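(* Let $A,B,D$ be lattices with finite generating sets $X_0,Y_0,P$ respectively, let $D$ satisfy Dean's condition (D) for $P$, and let $g\colon A\to D$, $h\colon B\to D$ be bounded epimorphisms. Let $E:=g(X_0)\cup h(Y_0)\cup P$ and $$Z:=\{(x,\alpha_h g(x)) : x\in X_0\}\cup\{(\beta_g h(y),y): y\in Y_0\}\cup\{(\alpha_g(d),\beta_h(d)) : d\in E\}\cup\{(\beta_g(d),\alpha_h(d)): d\in E\}\subseteq A\times B.$$ Let $X$ be the set of first components and $Y$ the set of second components of elements of $Z$ (these are finite generating sets of $A$ and $B$), and let $\langle Z\rangle$ be the sublattice of $A\times B$ generated by $Z$. Then for every $k\in\mathbb N$: (1) for all $b\in G_{Y,k}$ we have $(\alpha_{g,k}(h(b)),\,b)\in\langle Z\rangle$; (2) for all $a\in H_{X,k}$ we have $(a,\,\beta_{h,k}(g(a)))\in\langle Z\rangle$. Here $G,H,\alpha_{g,k},\beta_{h,k}$ are computed with respect to the generating set $X$ of $A$ (for $g$) and $Y$ of $B$ (for $h$).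
   Context: A lattice homomorphism $g\colon A\to D$ is lower bounded if for every $d\in D$ the set $\{x\in A : g(x)\ge d\}$ is empty or has a least element; upper bounded if for every $d$ the set $\{x: g(x)\le d\}$ is empty or has a greatest element; bounded if both. For a bounded epimorphism $g$, $\beta_g(d):=\bigwedge g^{-1}(d)$ is the least and $\alpha_g(d):=\bigvee g^{-1}(d)$ the greatest preimage of $d$. Dean's condition (D) for a lattice $D$ with finite generating set $P$: for all finite $S,T\subseteq D$ with $\bigwedge S\le\bigvee T$, either some $s\in S$ has $s\le\bigvee T$, or some $t\in T$ has $\bigwedge S\le t$, or some $p\in P$ has $\bigwedge S\le p\le\bigvee T$. For a lattice $A$ with finite generating set $X$ and $W\subseteq A$, let $W^\wedge:=\{\bigwedge U: U\subseteq W\text{ finite}\}$ and $W^\vee:=\{\bigvee U: U\subseteq W \text{ finite}\}$, with the conventions $\bigwedge\emptyset:=\bigvee X$ and $\bigvee\emptyset:=\bigwedge X$. Define $G_{X,0}:=X$, $H_{X,k}:=G_{X,k}^\wedge$, $G_{X,k+1}:=H_{X,k}^\vee$ for $k\in\mathbb N$. For an epimorphism $g\colon A\to D$, $k\in\mathbb N$, $d\in D$: $\alpha_{g,k}(d):=\bigvee\{w\in G_{X,k}: g(w)\le d\}$ and $\beta_{g,k}(d):=\bigwedge\{w\in H_{X,k}: g(w)\ge d\}$. *)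

theory Defs
  imports Main "HOL-Library.Product_Order"
begin

inductive_set sublat_gen :: "'a::lattice set \<Rightarrow> 'a set" for W :: "'a set" where
  gen_base: "x \<in> W \<Longrightarrow> x \<in> sublat_gen W"
| gen_inf: "x \<in> sublat_gen W \<Longrightarrow> y \<in> sublat_gen W \<Longrightarrow> inf x y \<in> sublat_gen W"
| gen_sup: "x \<in> sublat_gen W \<Longrightarrow> y \<in> sublat_gen W \<Longrightarrow> sup x y \<in> sublat_gen W"

definition fin_gen_set :: "'a::lattice set \<Rightarrow> bool" where
  "fin_gen_set X \<longleftrightarrow> finite X \<and> sublat_gen X = UNIV"

definition lattice_hom :: "('a::lattice \<Rightarrow> 'b::lattice) \<Rightarrow> bool" where
  "lattice_hom g \<longleftrightarrow> (\<forall>x y. g (inf x y) = inf (g x) (g y) \<and> g (sup x y) = sup (g x) (g y))"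

definition lattice_epi :: "('a::lattice \<Rightarrow> 'b::lattice) \<Rightarrow> bool" where
  "lattice_epi g \<longleftrightarrow> lattice_hom g \<and> surj g"

definition lower_bounded :: "('a::lattice \<Rightarrow> 'b::lattice) \<Rightarrow> bool" where
  "lower_bounded g \<longleftrightarrow> (\<forall>d. {x. d \<le> g x} = {} \<or>
      (\<exists>m. d \<le> g m \<and> (\<forall>x. d \<le> g x \<longrightarrow> m \<le> x)))"

definition upper_bounded :: "('a::lattice \<Rightarrow> 'b::lattice) \<Rightarrow> bool" where
  "upper_bounded g \<longleftrightarrow> (\<forall>d. {x. g x \<le> d} = {} \<or>
      (\<exists>m. g m \<le> d \<and> (\<forall>x. g x \<le> d \<longrightarrow> x \<le> m)))"

definition bounded_hom :: "('a::lattice \<Rightarrow> 'b::lattice) \<Rightarrow> bool" where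
  "bounded_hom g \<longleftrightarrow> lattice_hom g \<and> lower_bounded g \<and> upper_bounded g"

definition beta_map :: "('a::lattice \<Rightarrow> 'b::lattice) \<Rightarrow> 'b \<Rightarrow> 'a" where
  "beta_map g d = (LEAST x. g x = d)"

definition alpha_map :: "('a::lattice \<Rightarrow> 'b::lattice) \<Rightarrow> 'b \<Rightarrow> 'a" where
  "alpha_map g d = (GREATEST x. g x = d)"

definition dean_condition :: "'d::lattice set \<Rightarrow> bool" where
  "dean_condition P \<longleftrightarrow> (\<forall>S T. finite S \<and> S \<noteq> {} \<and> finite T \<and> T \<noteq> {} \<and>
      Inf_fin S \<le> Sup_fin T \<longrightarrow>
      (\<exists>s\<in>S. s \<le> Sup_fin T) \<or> (\<exists>t\<in>T. Inf_fin S \<le> t) \<or>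
      (\<exists>p\<in>P. Inf_fin S \<le> p \<and> p \<le> Sup_fin T))"

definition bigmeet :: "'a::lattice set \<Rightarrow> 'a set \<Rightarrow> 'a" where
  "bigmeet X U = (if U = {} then Sup_fin X else Inf_fin U)"

definition bigjoin :: "'a::lattice set \<Rightarrow> 'a set \<Rightarrow> 'a" where
  "bigjoin X U = (if U = {} then Inf_fin X else Sup_fin U)"

definition meet_cl :: "'a::lattice set \<Rightarrow> 'a set \<Rightarrow> 'a set" where
  "meet_cl X W = {bigmeet X U | U. finite U \<and> U \<subseteq> W}"

definition join_cl :: "'a::lattice set \<Rightarrow> 'a set \<Rightarrow> 'a set" where
  "join_cl X W = {bigjoin X U | U. finite U \<and> U \<subseteq> W}"

primrec G_set :: "'a::lattice set \<Rightarrow> nat \<Rightarrow> 'a set" where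
  "G_set X 0 = X"
| "G_set X (Suc k) = join_cl X (meet_cl X (G_set X k))"

definition H_set :: "'a::lattice set \<Rightarrow> nat \<Rightarrow> 'a set" where
  "H_set X k = meet_cl X (G_set X k)"

definition alpha_k :: "'a::lattice set \<Rightarrow> ('a \<Rightarrow> 'd::lattice) \<Rightarrow> nat \<Rightarrow> 'd \<Rightarrow> 'a" where
  "alpha_k X g k d = bigjoin X {w \<in> G_set X k. g w \<le> d}"

definition beta_k :: "'a::lattice set \<Rightarrow> ('a \<Rightarrow> 'd::lattice) \<Rightarrow> nat \<Rightarrow> 'd \<Rightarrow> 'a" where
  "beta_k X g k d = bigmeet X {w \<in> H_set X k. d \<le> g w}"

end

theory Submission
  imports Defs
begin


lemma hom_mono: "lattice_hom g \<Longrightarrow> x \<le> y \<Longrightarrow> g x \<le> g y"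
  unfolding lattice_hom_def by (metis le_iff_sup)

lemma hom_Inf_fin: "lattice_hom g \<Longrightarrow> finite U \<Longrightarrow> U \<noteq> {} \<Longrightarrow> g (Inf_fin U) = Inf_fin (g ` U)"
proof -
  assume h: "lattice_hom g"
  show "finite U \<Longrightarrow> U \<noteq> {} \<Longrightarrow> ?thesis"
    by (induction U rule: finite_ne_induct) (use h in \<open>auto simp: lattice_hom_def\<close>)
qed

lemma hom_Sup_fin: "lattice_hom g \<Longrightarrow> finite U \<Longrightarrow> U \<noteq> {} \<Longrightarrow> g (Sup_fin U) = Sup_fin (g ` U)"
proof -
  assume h: "lattice_hom g"
  show "finite U \<Longrightarrow> U \<noteq> {} \<Longrightarrow> ?thesis"
    by (induction U rule: finite_ne_induct) (use h in \<open>auto simp: lattice_hom_def\<close>)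
qed

lemma beta_props:
  assumes "lattice_epi g" "bounded_hom g"
  shows "g (beta_map g d) = d \<and> (\<forall>x. d \<le> g x \<longrightarrow> beta_map g d \<le> x)"
proof -
  have hom: "lattice_hom g" and sj: "surj g" using assms(1) by (auto simp: lattice_epi_def)
  obtain x0 where x0: "g x0 = d" using sj by (metis surjD)
  have "{x. d \<le> g x} \<noteq> {}" using x0 by auto
  then obtain m where m: "d \<le> g m" "\<forall>x. d \<le> g x \<longrightarrow> m \<le> x"
    using assms(2) unfolding bounded_hom_def lower_bounded_def by blast
  have "m \<le> x0" using m x0 by auto
  hence "g m \<le> d" using hom_mono[OF hom] x0 by auto
  hence gm: "g m = d" using m by (simp add: order_antisym)
  have "beta_map g d = m" unfolding beta_map_def
    by (rule Least_equality) (use gm m in auto)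
  thus ?thesis using gm m by auto
qed

lemma alpha_props:
  assumes "lattice_epi g" "bounded_hom g"
  shows "g (alpha_map g d) = d \<and> (\<forall>x. g x \<le> d \<longrightarrow> x \<le> alpha_map g d)"
proof -
  have hom: "lattice_hom g" and sj: "surj g" using assms(1) by (auto simp: lattice_epi_def)
  obtain x0 where x0: "g x0 = d" using sj by (metis surjD)
  have "{x. g x \<le> d} \<noteq> {}" using x0 by auto
  then obtain m where m: "g m \<le> d" "\<forall>x. g x \<le> d \<longrightarrow> x \<le> m"
    using assms(2) unfolding bounded_hom_def upper_bounded_def by blast
  have "x0 \<le> m" using m x0 by auto
  hence "d \<le> g m" using hom_mono[OF hom] x0 by auto
  hence gm: "g m = d" using m by (simp add: order_antisym)
  have "alpha_map g d = m" unfolding alpha_map_def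
    by (rule Greatest_equality) (use gm m in auto)
  thus ?thesis using gm m by auto
qed

lemma gen_bounds:
  assumes "W \<subseteq> X" "finite X" "a \<in> sublat_gen W"
  shows "a \<le> Sup_fin X \<and> Inf_fin X \<le> a"
  using assms(3)
proof (induction a rule: sublat_gen.induct)
  case (gen_base x)
  then show ?case using assms by (auto intro: Sup_fin.coboundedI Inf_fin.coboundedI)
next
  case (gen_inf x y)
  then show ?case by (auto intro: le_infI1)
next
  case (gen_sup x y)
  then show ?case by (auto intro: le_supI1)
qed

lemma meet_closed:
  assumes "finite U" "U \<noteq> {}" "\<forall>u\<in>U. Q u" "\<And>x y. Q x \<Longrightarrow> Q y \<Longrightarrow> Q (inf x y)"
  shows "Q (Inf_fin U)"
  using assms(1,2,3)
proof (induction U rule: finite_ne_induct)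
  case (singleton x) then show ?case by simp
next
  case (insert x F) then show ?case using assms(4) by simp
qed

lemma join_closed:
  assumes "finite U" "U \<noteq> {}" "\<forall>u\<in>U. Q u" "\<And>x y. Q x \<Longrightarrow> Q y \<Longrightarrow> Q (sup x y)"
  shows "Q (Sup_fin U)"
  using assms(1,2,3)
proof (induction U rule: finite_ne_induct)
  case (singleton x) then show ?case by simp
next
  case (insert x F) then show ?case using assms(4) by simp
qed

lemma finite_meet_cl: "finite W \<Longrightarrow> finite (meet_cl X W)"
proof -
  assume "finite W"
  have "meet_cl X W \<subseteq> bigmeet X ` Pow W" unfolding meet_cl_def by auto
  thus ?thesis using \<open>finite W\<close> finite_subset by blast
qed

lemma finite_join_cl: "finite W \<Longrightarrow> finite (join_cl X W)"
proof -
  assume "finite W"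
  have "join_cl X W \<subseteq> bigjoin X ` Pow W" unfolding join_cl_def by auto
  thus ?thesis using \<open>finite W\<close> finite_subset by blast
qed

lemma sub_meet_cl: "W \<subseteq> meet_cl X W"
proof
  fix x assume "x \<in> W"
  hence e: "bigmeet X {x} = x" "finite {x}" "{x} \<subseteq> W" by (simp_all add: bigmeet_def)
  show "x \<in> meet_cl X W" unfolding meet_cl_def
    by (rule CollectI, rule exI[of _ "{x}"]) (use e in simp)
qed

lemma sub_join_cl: "W \<subseteq> join_cl X W"
proof
  fix x assume "x \<in> W"
  hence e: "bigjoin X {x} = x" "finite {x}" "{x} \<subseteq> W" by (simp_all add: bigjoin_def)
  show "x \<in> join_cl X W" unfolding join_cl_def
    by (rule CollectI, rule exI[of _ "{x}"]) (use e in simp)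
qed

lemma top_meet_cl: "Sup_fin X \<in> meet_cl X W"
  unfolding meet_cl_def bigmeet_def by (rule CollectI, rule exI[of _ "{}"]) auto

lemma bot_join_cl: "Inf_fin X \<in> join_cl X W"
  unfolding join_cl_def bigjoin_def by (rule CollectI, rule exI[of _ "{}"]) auto

lemma meet_cl_inf:
  assumes top: "\<And>a. a \<le> Sup_fin X" and "x \<in> meet_cl X W" "y \<in> meet_cl X W"
  shows "inf x y \<in> meet_cl X W"
proof -
  obtain U1 where U1: "finite U1" "U1 \<subseteq> W" "x = bigmeet X U1" using assms(2) unfolding meet_cl_def by auto
  obtain U2 where U2: "finite U2" "U2 \<subseteq> W" "y = bigmeet X U2" using assms(3) unfolding meet_cl_def by auto
  show ?thesis
  proof (cases "U1 = {} \<or> U2 = {}")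
    case True
    hence "inf x y = x \<or> inf x y = y" using U1 U2 top by (auto simp: bigmeet_def inf_absorb1 inf_absorb2)
    then show ?thesis using assms(2,3) by auto
  next
    case False
    hence "inf x y = bigmeet X (U1 \<union> U2)" using U1 U2 by (simp add: bigmeet_def Inf_fin.union)
    moreover have "finite (U1 \<union> U2)" "U1 \<union> U2 \<subseteq> W" using U1 U2 by auto
    ultimately show ?thesis unfolding meet_cl_def by blast
  qed
qed

lemma join_cl_sup:
  assumes bot: "\<And>a. Inf_fin X \<le> a" and "x \<in> join_cl X W" "y \<in> join_cl X W"
  shows "sup x y \<in> join_cl X W"
proof -
  obtain U1 where U1: "finite U1" "U1 \<subseteq> W" "x = bigjoin X U1" using assms(2) unfolding join_cl_def by auto
  obtain U2 where U2: "finite U2" "U2 \<subseteq> W" "y = bigjoin X U2" using assms(3) unfolding join_cl_def by auto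
  show ?thesis
  proof (cases "U1 = {} \<or> U2 = {}")
    case True
    hence "sup x y = x \<or> sup x y = y" using U1 U2 bot by (auto simp: bigjoin_def sup_absorb1 sup_absorb2)
    then show ?thesis using assms(2,3) by auto
  next
    case False
    hence "sup x y = bigjoin X (U1 \<union> U2)" using U1 U2 by (simp add: bigjoin_def Sup_fin.union)
    moreover have "finite (U1 \<union> U2)" "U1 \<union> U2 \<subseteq> W" using U1 U2 by auto
    ultimately show ?thesis unfolding join_cl_def by blast
  qed
qed

lemma finite_G: "finite X \<Longrightarrow> finite (G_set X k)"
  by (induction k) (auto intro: finite_meet_cl finite_join_cl)

lemma finite_H: "finite X \<Longrightarrow> finite (H_set X k)"
  by (simp add: H_set_def finite_G finite_meet_cl)

lemma G_sub_H: "G_set X k \<subseteq> H_set X k"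
  by (simp add: H_set_def sub_meet_cl)

lemma H_sub_G: "H_set X k \<subseteq> G_set X (Suc k)"
  by (simp add: H_set_def sub_join_cl)

lemma X_sub_G: "X \<subseteq> G_set X k"
proof (induction k)
  case 0 then show ?case by simp
next
  case (Suc k)
  have "G_set X k \<subseteq> G_set X (Suc k)" using G_sub_H[of X k] H_sub_G[of X k] by (rule subset_trans)
  then show ?case using Suc by (rule subset_trans[rotated])
qed

lemma X_sub_H: "X \<subseteq> H_set X k"
  using X_sub_G G_sub_H by blast

lemma G_Suc: "G_set X (Suc k) = join_cl X (H_set X k)"
  by (simp add: H_set_def)




lemma partner_H:
  fixes R :: "'a::lattice \<Rightarrow> 'b::lattice \<Rightarrow> bool"
  assumes Rinf: "\<And>a b c d. R a b \<Longrightarrow> R c d \<Longrightarrow> R (inf a c) (inf b d)"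
    and top: "R (Sup_fin X) (Sup_fin Y)"
    and tY: "\<And>b. b \<le> Sup_fin Y"
    and fX: "finite X"
    and G: "\<forall>a\<in>G_set X k. \<exists>y\<in>G_set Y k. R a y"
  shows "\<forall>a\<in>H_set X k. \<exists>y\<in>H_set Y k. R a y"
proof
  fix a assume "a \<in> H_set X k"
  then obtain U where U: "finite U" "U \<subseteq> G_set X k" "a = bigmeet X U"
    unfolding H_set_def meet_cl_def by auto
  show "\<exists>y\<in>H_set Y k. R a y"
  proof (cases "U = {}")
    case True
    then show ?thesis using U top top_meet_cl[of Y] by (auto simp: bigmeet_def H_set_def)
  next
    case False
    have "(\<lambda>t. \<exists>y\<in>H_set Y k. R t y) (Inf_fin U)"
    proof (rule meet_closed[OF U(1) False])
      show "\<forall>u\<in>U. \<exists>y\<in>H_set Y k. R u y" using U G G_sub_H by blast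
      show "\<exists>y\<in>H_set Y k. R (inf x z) y" if h1: "\<exists>y\<in>H_set Y k. R x y" and h2: "\<exists>y\<in>H_set Y k. R z y" for x z
      proof -
        obtain y1 y2 where y: "y1 \<in> H_set Y k" "R x y1" "y2 \<in> H_set Y k" "R z y2" using h1 h2 by blast
        have "inf y1 y2 \<in> H_set Y k" using meet_cl_inf[OF tY] y(1,3) unfolding H_set_def by blast
        thus ?thesis using Rinf[OF y(2,4)] by blast
      qed
    qed
    then show ?thesis using U False by (simp add: bigmeet_def)
  qed
qed

lemma partner_G:
  fixes R :: "'a::lattice \<Rightarrow> 'b::lattice \<Rightarrow> bool"
  assumes Rsup: "\<And>a b c d. R a b \<Longrightarrow> R c d \<Longrightarrow> R (sup a c) (sup b d)"
    and bot: "R (Inf_fin X) (Inf_fin Y)"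
    and bY: "\<And>b. Inf_fin Y \<le> b"
    and fX: "finite X"
    and H: "\<forall>a\<in>H_set X k. \<exists>y\<in>H_set Y k. R a y"
  shows "\<forall>a\<in>G_set X (Suc k). \<exists>y\<in>G_set Y (Suc k). R a y"
proof
  fix a assume "a \<in> G_set X (Suc k)"
  then obtain U where U: "finite U" "U \<subseteq> H_set X k" "a = bigjoin X U"
    unfolding G_Suc join_cl_def by auto
  show "\<exists>y\<in>G_set Y (Suc k). R a y"
  proof (cases "U = {}")
    case True
    then show ?thesis using U bot bot_join_cl[of Y] by (auto simp: bigjoin_def G_Suc)
  next
    case False
    have "(\<lambda>t. \<exists>y\<in>G_set Y (Suc k). R t y) (Sup_fin U)"
    proof (rule join_closed[OF U(1) False])
      show "\<forall>u\<in>U. \<exists>y\<in>G_set Y (Suc k). R u y" using U H H_sub_G by blast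
      show "\<exists>y\<in>G_set Y (Suc k). R (sup x z) y" if h1: "\<exists>y\<in>G_set Y (Suc k). R x y" and h2: "\<exists>y\<in>G_set Y (Suc k). R z y" for x z
      proof -
        obtain y1 y2 where y: "y1 \<in> G_set Y (Suc k)" "R x y1" "y2 \<in> G_set Y (Suc k)" "R z y2" using h1 h2 by blast
        have "sup y1 y2 \<in> G_set Y (Suc k)" using join_cl_sup[OF bY] y(1,3) unfolding G_Suc by blast
        thus ?thesis using Rsup[OF y(2,4)] by blast
      qed
    qed
    then show ?thesis using U False by (simp add: bigjoin_def)
  qed
qed

lemma partner:
  fixes R :: "'a::lattice \<Rightarrow> 'b::lattice \<Rightarrow> bool"
  assumes Rinf: "\<And>a b c d. R a b \<Longrightarrow> R c d \<Longrightarrow> R (inf a c) (inf b d)"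
    and Rsup: "\<And>a b c d. R a b \<Longrightarrow> R c d \<Longrightarrow> R (sup a c) (sup b d)"
    and top: "R (Sup_fin X) (Sup_fin Y)"
    and bot: "R (Inf_fin X) (Inf_fin Y)"
    and tY: "\<And>b. b \<le> Sup_fin Y" and bY: "\<And>b. Inf_fin Y \<le> b"
    and fX: "finite X"
    and base: "\<forall>x\<in>X. \<exists>y\<in>Y. R x y"
  shows "(\<forall>a\<in>G_set X k. \<exists>y\<in>G_set Y k. R a y) \<and> (\<forall>a\<in>H_set X k. \<exists>y\<in>H_set Y k. R a y)"
proof (induction k)
  case 0
  have "\<forall>a\<in>G_set X 0. \<exists>y\<in>G_set Y 0. R a y" using base by simp
  then show ?case using partner_H[OF Rinf top tY fX] by blast
next
  case (Suc k)
  have "\<forall>a\<in>G_set X (Suc k). \<exists>y\<in>G_set Y (Suc k). R a y"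
    using partner_G[OF Rsup bot bY fX] Suc by blast
  then show ?case using partner_H[OF Rinf top tY fX] by blast
qed




lemma sublat_gen_empty: "sublat_gen {} = {}"
proof -
  have "x \<in> sublat_gen {} \<Longrightarrow> False" for x :: 'a
    by (induction x rule: sublat_gen.induct) auto
  thus ?thesis by blast
qed

lemma fin_gen_ne: "fin_gen_set X \<Longrightarrow> X \<noteq> {}"
  unfolding fin_gen_set_def using sublat_gen_empty by force

locale pbctx =
  fixes X0 :: "'a::lattice set" and Y0 :: "'b::lattice set" and P :: "'d::lattice set"
    and g :: "'a \<Rightarrow> 'd" and h :: "'b \<Rightarrow> 'd"
    and E :: "'d set" and Z :: "('a \<times> 'b) set" and X :: "'a set" and Y :: "'b set"
  assumes fX0: "fin_gen_set X0" and fY0: "fin_gen_set Y0" and fP: "fin_gen_set P"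
    and dean: "dean_condition P"
    and eg: "lattice_epi g" and bg: "bounded_hom g"
    and eh: "lattice_epi h" and bh: "bounded_hom h"
    and E_def: "E = g ` X0 \<union> h ` Y0 \<union> P"
    and Z_def: "Z = {(x, alpha_map h (g x)) | x. x \<in> X0}
                 \<union> {(beta_map g (h y), y) | y. y \<in> Y0}
                 \<union> {(alpha_map g d, beta_map h d) | d. d \<in> E}
                 \<union> {(beta_map g d, alpha_map h d) | d. d \<in> E}"
    and X_def: "X = fst ` Z" and Y_def: "Y = snd ` Z"
begin

lemma hg: "lattice_hom g" using eg by (simp add: lattice_epi_def)
lemma hh: "lattice_hom h" using eh by (simp add: lattice_epi_def)
lemma monog: "x \<le> y \<Longrightarrow> g x \<le> g y" using hom_mono[OF hg] .
lemma monoh: "x \<le> y \<Longrightarrow> h x \<le> h y" using hom_mono[OF hh] .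

lemma gb: "g (beta_map g d) = d" using beta_props[OF eg bg] by blast
lemma gbl: "d \<le> g x \<Longrightarrow> beta_map g d \<le> x" using beta_props[OF eg bg] by blast
lemma ga: "g (alpha_map g d) = d" using alpha_props[OF eg bg] by blast
lemma gal: "g x \<le> d \<Longrightarrow> x \<le> alpha_map g d" using alpha_props[OF eg bg] by blast
lemma hb: "h (beta_map h d) = d" using beta_props[OF eh bh] by blast
lemma hbl: "d \<le> h x \<Longrightarrow> beta_map h d \<le> x" using beta_props[OF eh bh] by blast
lemma ha: "h (alpha_map h d) = d" using alpha_props[OF eh bh] by blast
lemma hal: "h x \<le> d \<Longrightarrow> x \<le> alpha_map h d" using alpha_props[OF eh bh] by blast

lemma finE: "finite E"
  using fX0 fY0 fP by (simp add: E_def fin_gen_set_def)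

lemma finZ: "finite Z"
  using fX0 fY0 finE by (simp add: Z_def fin_gen_set_def Setcompr_eq_image)

lemma finX: "finite X" using finZ by (simp add: X_def)
lemma finY: "finite Y" using finZ by (simp add: Y_def)

lemma X0_sub: "X0 \<subseteq> X"
proof
  fix x assume "x \<in> X0"
  hence "(x, alpha_map h (g x)) \<in> Z" unfolding Z_def by blast
  thus "x \<in> X" unfolding X_def by (metis fst_conv image_eqI)
qed

lemma Y0_sub: "Y0 \<subseteq> Y"
proof
  fix y assume "y \<in> Y0"
  hence "(beta_map g (h y), y) \<in> Z" unfolding Z_def by blast
  thus "y \<in> Y" unfolding Y_def by (metis snd_conv image_eqI)
qed

lemma X_ne: "X \<noteq> {}" using X0_sub fin_gen_ne[OF fX0] by blast
lemma Y_ne: "Y \<noteq> {}" using Y0_sub fin_gen_ne[OF fY0] by blast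
lemma Z_ne: "Z \<noteq> {}" using X_ne by (simp add: X_def)

lemma topX: "a \<le> Sup_fin X"
  using gen_bounds[OF X0_sub finX, of a] fX0 by (simp add: fin_gen_set_def)
lemma botX: "Inf_fin X \<le> a"
  using gen_bounds[OF X0_sub finX, of a] fX0 by (simp add: fin_gen_set_def)
lemma topY: "b \<le> Sup_fin Y"
  using gen_bounds[OF Y0_sub finY, of b] fY0 by (simp add: fin_gen_set_def)
lemma botY: "Inf_fin Y \<le> b"
  using gen_bounds[OF Y0_sub finY, of b] fY0 by (simp add: fin_gen_set_def)

lemma S_inf: "(a,b) \<in> sublat_gen Z \<Longrightarrow> (c,d) \<in> sublat_gen Z \<Longrightarrow> (inf a c, inf b d) \<in> sublat_gen Z"
  using sublat_gen.gen_inf[of "(a,b)" Z "(c,d)"] by simp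
lemma S_sup: "(a,b) \<in> sublat_gen Z \<Longrightarrow> (c,d) \<in> sublat_gen Z \<Longrightarrow> (sup a c, sup b d) \<in> sublat_gen Z"
  using sublat_gen.gen_sup[of "(a,b)" Z "(c,d)"] by simp
lemma ZS: "z \<in> Z \<Longrightarrow> z \<in> sublat_gen Z" by (rule sublat_gen.gen_base)

lemma Z_pb: "z \<in> Z \<Longrightarrow> g (fst z) = h (snd z)"
  unfolding Z_def by (auto simp: ha gb ga hb)

lemma S_pb': "p \<in> sublat_gen Z \<Longrightarrow> g (fst p) = h (snd p)"
proof (induction p rule: sublat_gen.induct)
  case (gen_base x) then show ?case by (rule Z_pb)
next
  case (gen_inf x y) then show ?case using hg hh by (simp add: lattice_hom_def)
next
  case (gen_sup x y) then show ?case using hg hh by (simp add: lattice_hom_def)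
qed

lemma S_pb: "(a,b) \<in> sublat_gen Z \<Longrightarrow> g a = h b"
  using S_pb'[of "(a,b)"] by simp

lemma hom_fst: "lattice_hom fst" by (simp add: lattice_hom_def)
lemma hom_snd: "lattice_hom snd" by (simp add: lattice_hom_def)

lemma topS: "(Sup_fin X, Sup_fin Y) \<in> sublat_gen Z"
proof -
  have "Sup_fin Z \<in> sublat_gen Z"
    by (rule join_closed[OF finZ Z_ne, where Q = "\<lambda>p. p \<in> sublat_gen Z"])
       (auto intro: sublat_gen.intros)
  moreover have "Sup_fin Z = (Sup_fin X, Sup_fin Y)"
    using hom_Sup_fin[OF hom_fst finZ Z_ne] hom_Sup_fin[OF hom_snd finZ Z_ne]
    by (simp add: X_def Y_def prod_eq_iff)
  ultimately show ?thesis by simp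
qed

lemma botS: "(Inf_fin X, Inf_fin Y) \<in> sublat_gen Z"
proof -
  have "Inf_fin Z \<in> sublat_gen Z"
    by (rule meet_closed[OF finZ Z_ne, where Q = "\<lambda>p. p \<in> sublat_gen Z"])
       (auto intro: sublat_gen.intros)
  moreover have "Inf_fin Z = (Inf_fin X, Inf_fin Y)"
    using hom_Inf_fin[OF hom_fst finZ Z_ne] hom_Inf_fin[OF hom_snd finZ Z_ne]
    by (simp add: X_def Y_def prod_eq_iff)
  ultimately show ?thesis by simp
qed

lemma gX_E: "x \<in> X \<Longrightarrow> g x \<in> E"
  unfolding X_def Z_def E_def by (auto simp: ha gb ga hb)

lemma hY_E: "y \<in> Y \<Longrightarrow> h y \<in> E"
  unfolding Y_def Z_def E_def by (auto simp: ha gb ga hb)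

lemma base0:
  assumes "d \<in> E" "g w \<le> d" "d \<le> h b"
  shows "\<exists>x y. (x,y) \<in> sublat_gen Z \<and> w \<le> x \<and> y \<le> b \<and> x \<in> X"
proof -
  have z: "(alpha_map g d, beta_map h d) \<in> Z" using assms(1) unfolding Z_def by blast
  have "alpha_map g d \<in> X" using z unfolding X_def by (metis fst_conv image_eqI)
  moreover have "w \<le> alpha_map g d" using gal assms(2) .
  moreover have "beta_map h d \<le> b" using hbl assms(3) .
  ultimately show ?thesis using ZS[OF z] by blast
qed

definition Good :: "nat \<Rightarrow> 'b \<Rightarrow> bool" where
  "Good j b \<longleftrightarrow> (\<forall>w\<in>H_set X j. g w \<le> h b \<longrightarrow>
      (\<exists>x y. (x,y) \<in> sublat_gen Z \<and> w \<le> x \<and> y \<le> b \<and> x \<in> H_set X j))"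

lemma Good_Y: "b \<in> Y \<Longrightarrow> Good j b"
  unfolding Good_def
proof (intro ballI impI)
  fix w assume "b \<in> Y" "w \<in> H_set X j" "g w \<le> h b"
  then obtain x y where "(x,y) \<in> sublat_gen Z" "w \<le> x" "y \<le> b" "x \<in> X"
    using base0[OF hY_E, of b w b] by blast
  thus "\<exists>x y. (x,y) \<in> sublat_gen Z \<and> w \<le> x \<and> y \<le> b \<and> x \<in> H_set X j"
    using X_sub_H by blast
qed

lemma Good_inf:
  assumes "Good j b1" "Good j b2" shows "Good j (inf b1 b2)"
  unfolding Good_def
proof (intro ballI impI)
  fix w assume w: "w \<in> H_set X j" "g w \<le> h (inf b1 b2)"
  have "h (inf b1 b2) = inf (h b1) (h b2)" using hh by (simp add: lattice_hom_def)
  hence "g w \<le> h b1" "g w \<le> h b2" using w by auto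
  then obtain x1 y1 x2 y2 where p: "(x1,y1) \<in> sublat_gen Z" "w \<le> x1" "y1 \<le> b1" "x1 \<in> H_set X j"
    "(x2,y2) \<in> sublat_gen Z" "w \<le> x2" "y2 \<le> b2" "x2 \<in> H_set X j"
    using assms w(1) unfolding Good_def by meson
  have "inf x1 x2 \<in> H_set X j" using meet_cl_inf[OF topX] p(4,8) unfolding H_set_def by blast
  moreover have "(inf x1 x2, inf y1 y2) \<in> sublat_gen Z" using S_inf p(1,5) .
  moreover have "w \<le> inf x1 x2" "inf y1 y2 \<le> inf b1 b2" using p by (auto intro: le_infI1 le_infI2)
  ultimately show "\<exists>x y. (x,y) \<in> sublat_gen Z \<and> w \<le> x \<and> y \<le> inf b1 b2 \<and> x \<in> H_set X j" by blast
qed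

lemma Good_top: "Good j (Sup_fin Y)"
  unfolding Good_def
proof (intro ballI impI)
  fix w
  have "Sup_fin X \<in> H_set X j" by (simp add: H_set_def top_meet_cl)
  thus "\<exists>x y. (x,y) \<in> sublat_gen Z \<and> w \<le> x \<and> y \<le> Sup_fin Y \<and> x \<in> H_set X j"
    using topS topX by blast
qed

lemma Good_H:
  assumes "\<forall>b'\<in>G_set Y m. Good j b'" "b \<in> H_set Y m"
  shows "Good j b"
proof -
  obtain V where V: "finite V" "V \<subseteq> G_set Y m" "b = bigmeet Y V"
    using assms(2) unfolding H_set_def meet_cl_def by auto
  show ?thesis
  proof (cases "V = {}")
    case True then show ?thesis using V Good_top by (simp add: bigmeet_def)
  next
    case False
    have "Good j (Inf_fin V)"
      by (rule meet_closed[OF V(1) False, where Q = "Good j"]) (use assms(1) V(2) Good_inf in auto)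
    then show ?thesis using V False by (simp add: bigmeet_def)
  qed
qed

lemma GoodG:
  assumes prev: "\<forall>j'. j = Suc j' \<longrightarrow> Good j' b" and u: "u \<in> G_set X j" "g u \<le> h b"
  shows "\<exists>x y. (x,y) \<in> sublat_gen Z \<and> u \<le> x \<and> y \<le> b \<and> x \<in> G_set X j"
proof (cases j)
  case 0
  then have "u \<in> X" using u by simp
  then show ?thesis using base0[OF gX_E[of u], of u b] u 0 by auto
next
  case (Suc j')
  have gd: "Good j' b" using prev Suc by blast
  have uj: "u \<in> join_cl X (H_set X j')" using u(1) Suc by (simp add: H_set_def)
  obtain U where U: "finite U" "U \<subseteq> H_set X j'" "u = bigjoin X U"
    using uj unfolding join_cl_def by auto
  show ?thesis
  proof (cases "U = {}")
    case True
    have "Inf_fin X \<in> G_set X j" using Suc by (simp add: G_Suc bot_join_cl)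
    then show ?thesis using True U botS botY by (auto simp: bigjoin_def)
  next
    case False
    let ?Q = "\<lambda>t. \<exists>x y. (x,y) \<in> sublat_gen Z \<and> t \<le> x \<and> y \<le> b \<and> x \<in> G_set X (Suc j')"
    have "?Q (Sup_fin U)"
    proof (rule join_closed[OF U(1) False])
      show "\<forall>t\<in>U. ?Q t"
      proof
        fix t assume t: "t \<in> U"
        have "t \<le> u" using U False t by (simp add: bigjoin_def Sup_fin.coboundedI)
        hence "g t \<le> h b" using monog u(2) order_trans by blast
        then obtain x y where "(x,y) \<in> sublat_gen Z" "t \<le> x" "y \<le> b" "x \<in> H_set X j'"
          using gd t U(2) unfolding Good_def by blast
        thus "?Q t" using H_sub_G by blast
      qed
      show "?Q (sup x z)" if h1: "?Q x" and h2: "?Q z" for x z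
      proof -
        obtain x1 y1 x2 y2 where p: "(x1,y1) \<in> sublat_gen Z" "x \<le> x1" "y1 \<le> b" "x1 \<in> G_set X (Suc j')"
          "(x2,y2) \<in> sublat_gen Z" "z \<le> x2" "y2 \<le> b" "x2 \<in> G_set X (Suc j')"
          using h1 h2 by meson
        have "sup x1 x2 \<in> G_set X (Suc j')" using join_cl_sup[OF botX] p(4,8) unfolding G_Suc by blast
        moreover have "(sup x1 x2, sup y1 y2) \<in> sublat_gen Z" using S_sup p(1,5) .
        moreover have "sup x z \<le> sup x1 x2" "sup y1 y2 \<le> b" using p by (auto intro: le_supI1 le_supI2)
        ultimately show ?thesis by blast
      qed
    qed
    then show ?thesis using U False Suc by (simp add: bigjoin_def)
  qed
qed

lemma Good_step1:
  assumes hyp: "\<forall>j v. v \<in> H_set Y m \<longrightarrow> Good j v"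
    and prev: "\<forall>j'. j = Suc j' \<longrightarrow> Good j' b" and bG: "b \<in> G_set Y (Suc m)"
  shows "Good j b"
  unfolding Good_def
proof (intro ballI impI)
  fix w assume wH: "w \<in> H_set X j" and le: "g w \<le> h b"
  obtain U where U: "finite U" "U \<subseteq> G_set X j" "w = bigmeet X U"
    using wH unfolding H_set_def meet_cl_def by auto
  obtain V where V: "finite V" "V \<subseteq> H_set Y m" "b = bigjoin Y V"
    using bG unfolding G_Suc join_cl_def by auto
  show "\<exists>x y. (x,y) \<in> sublat_gen Z \<and> w \<le> x \<and> y \<le> b \<and> x \<in> H_set X j"
  proof (cases "U = {}")
    case True
    hence w: "w = Sup_fin X" using U by (simp add: bigmeet_def)
    let ?Q = "\<lambda>t. \<exists>x y. (x,y) \<in> sublat_gen Z \<and> t \<le> x \<and> y \<le> b"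
    have "?Q (Sup_fin X)"
    proof (rule join_closed[OF finX X_ne])
      show "\<forall>t\<in>X. ?Q t"
      proof
        fix t assume t: "t \<in> X"
        have "g t \<le> h b" using monog[OF topX[of t]] le w by simp
        thus "?Q t" using base0[OF gX_E[OF t], of t b] by blast
      qed
      show "?Q (sup x z)" if h1: "?Q x" and h2: "?Q z" for x z
      proof -
        obtain x1 y1 x2 y2 where p: "(x1,y1) \<in> sublat_gen Z" "x \<le> x1" "y1 \<le> b"
          "(x2,y2) \<in> sublat_gen Z" "z \<le> x2" "y2 \<le> b"
          using h1 h2 by meson
        have "(sup x1 x2, sup y1 y2) \<in> sublat_gen Z" using S_sup p(1,4) .
        moreover have "sup x z \<le> sup x1 x2" "sup y1 y2 \<le> b" using p by (auto intro: le_supI1 le_supI2)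
        ultimately show ?thesis by blast
      qed
    qed
    then obtain x y where xy: "(x,y) \<in> sublat_gen Z" "Sup_fin X \<le> x" "y \<le> b" by blast
    hence "x = Sup_fin X" using topX[of x] by (simp add: order_antisym)
    moreover have "Sup_fin X \<in> H_set X j" by (simp add: H_set_def top_meet_cl)
    ultimately show ?thesis using xy w by blast
  next
    case Une: False
    show ?thesis
    proof (cases "V = {}")
      case True
      hence b: "b = Inf_fin Y" using V by (simp add: bigjoin_def)
      have "bigmeet Y Y \<in> H_set Y m"
        unfolding H_set_def meet_cl_def using finY X_sub_G[of Y m] by blast
      hence "Inf_fin Y \<in> H_set Y m" using Y_ne by (simp add: bigmeet_def)
      hence "Good j b" using hyp b by blast
      then show ?thesis using wH le unfolding Good_def by blast
    next
      case Vne: False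
      have gw: "g w = Inf_fin (g ` U)" using U Une hom_Inf_fin[OF hg U(1) Une] by (simp add: bigmeet_def)
      have hbv: "h b = Sup_fin (h ` V)" using V Vne hom_Sup_fin[OF hh V(1) Vne] by (simp add: bigjoin_def)
      have "(\<exists>s\<in>g ` U. s \<le> Sup_fin (h ` V)) \<or> (\<exists>t\<in>h ` V. Inf_fin (g ` U) \<le> t) \<or>
            (\<exists>p\<in>P. Inf_fin (g ` U) \<le> p \<and> p \<le> Sup_fin (h ` V))"
      proof -
        have D: "finite (g`U) \<and> g`U \<noteq> {} \<and> finite (h`V) \<and> h`V \<noteq> {} \<and> Inf_fin (g`U) \<le> Sup_fin (h`V)"
          using U(1) V(1) Une Vne le gw hbv by simp
        show ?thesis
          by (rule mp[OF spec[OF spec[OF dean[unfolded dean_condition_def], of "g`U"], of "h`V"] D])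
      qed
      then show ?thesis
      proof (elim disjE)
        assume "\<exists>s\<in>g ` U. s \<le> Sup_fin (h ` V)"
        then obtain u where uU: "u \<in> U" and gu: "g u \<le> h b" using hbv by auto
        obtain x y where xy: "(x,y) \<in> sublat_gen Z" "u \<le> x" "y \<le> b" "x \<in> G_set X j"
          using GoodG[OF prev, of u] uU U(2) gu by blast
        have "w \<le> u" using U Une uU by (simp add: bigmeet_def Inf_fin.coboundedI)
        thus ?thesis using xy G_sub_H order_trans by blast
      next
        assume "\<exists>t\<in>h ` V. Inf_fin (g ` U) \<le> t"
        then obtain v where vV: "v \<in> V" and gv: "g w \<le> h v" using gw by auto
        have "Good j v" using hyp vV V(2) by blast
        then obtain x y where xy: "(x,y) \<in> sublat_gen Z" "w \<le> x" "y \<le> v" "x \<in> H_set X j"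
          using wH gv unfolding Good_def by blast
        have "v \<le> b" using V Vne vV by (simp add: bigjoin_def Sup_fin.coboundedI)
        thus ?thesis using xy order_trans by blast
      next
        assume "\<exists>p\<in>P. Inf_fin (g ` U) \<le> p \<and> p \<le> Sup_fin (h ` V)"
        then obtain p where "p \<in> P" "g w \<le> p" "p \<le> h b" using gw hbv by auto
        moreover have "p \<in> E" using \<open>p \<in> P\<close> by (simp add: E_def)
        ultimately show ?thesis using base0[of p w b] X_sub_H by blast
      qed
    qed
  qed
qed

lemma Good_all: "\<forall>j. \<forall>b\<in>G_set Y m. Good j b"
proof (induction m)
  case 0 then show ?case using Good_Y by simp
next
  case (Suc m)
  have hyp: "\<forall>j v. v \<in> H_set Y m \<longrightarrow> Good j v" using Good_H Suc by blast
  show ?case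
  proof (intro allI ballI)
    fix j b assume bG: "b \<in> G_set Y (Suc m)"
    show "Good j b"
    proof (induction j)
      case 0 then show ?case using Good_step1[OF hyp _ bG] by simp
    next
      case (Suc j) then show ?case using Good_step1[OF hyp _ bG] by simp
    qed
  qed
qed

lemma partY: "b \<in> G_set Y k \<Longrightarrow> \<exists>x\<in>G_set X k. (x,b) \<in> sublat_gen Z"
proof -
  have base: "\<forall>y\<in>Y. \<exists>x\<in>X. (\<lambda>b a. (a,b) \<in> sublat_gen Z) y x"
    unfolding X_def Y_def using ZS by force
  have "(\<forall>a\<in>G_set Y k. \<exists>y\<in>G_set X k. (\<lambda>b a. (a,b) \<in> sublat_gen Z) a y) \<and>
        (\<forall>a\<in>H_set Y k. \<exists>y\<in>H_set X k. (\<lambda>b a. (a,b) \<in> sublat_gen Z) a y)"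
    by (rule partner[OF _ _ _ _ topX botX finY base]) (auto intro: S_inf S_sup topS botS)
  thus "b \<in> G_set Y k \<Longrightarrow> ?thesis" by blast
qed

lemma partX: "a \<in> H_set X k \<Longrightarrow> \<exists>y\<in>H_set Y k. (a,y) \<in> sublat_gen Z"
proof -
  have base: "\<forall>x\<in>X. \<exists>y\<in>Y. (\<lambda>a b. (a,b) \<in> sublat_gen Z) x y"
    unfolding X_def Y_def using ZS by force
  have "(\<forall>a\<in>G_set X k. \<exists>y\<in>G_set Y k. (\<lambda>a b. (a,b) \<in> sublat_gen Z) a y) \<and>
        (\<forall>a\<in>H_set X k. \<exists>y\<in>H_set Y k. (\<lambda>a b. (a,b) \<in> sublat_gen Z) a y)"
    by (rule partner[OF _ _ _ _ topY botY finX base]) (auto intro: S_inf S_sup topS botS)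
  thus "a \<in> H_set X k \<Longrightarrow> ?thesis" by blast
qed

end




context pbctx
begin

lemma main1:
  assumes bG: "b \<in> G_set Y k"
  shows "(alpha_k X g k (h b), b) \<in> sublat_gen Z"
proof -
  define W where "W = {w \<in> G_set X k. g w \<le> h b}"
  have finW: "finite W" unfolding W_def using finite_G[OF finX, of k] by simp
  obtain xs where xs: "xs \<in> G_set X k" "(xs, b) \<in> sublat_gen Z" using partY[OF bG] by blast
  have "g xs = h b" using S_pb[OF xs(2)] .
  hence xsW: "xs \<in> W" unfolding W_def using xs(1) by simp
  hence Wne: "W \<noteq> {}" by blast
  have al: "alpha_k X g k (h b) = Sup_fin W" unfolding alpha_k_def bigjoin_def W_def[symmetric] using Wne by simp
  let ?Q = "\<lambda>t. \<exists>x y. (x,y) \<in> sublat_gen Z \<and> t \<le> x \<and> x \<le> Sup_fin W \<and> y \<le> b"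
  have "?Q (Sup_fin W)"
  proof (rule join_closed[OF finW Wne, where Q = ?Q])
    show "\<forall>t\<in>W. ?Q t"
    proof
      fix t assume t: "t \<in> W"
      have prev: "\<forall>j'. k = Suc j' \<longrightarrow> Good j' b" using Good_all bG by blast
      obtain x y where xy: "(x,y) \<in> sublat_gen Z" "t \<le> x" "y \<le> b" "x \<in> G_set X k"
        using GoodG[OF prev, of t] t unfolding W_def by blast
      have "g x = h y" using S_pb[OF xy(1)] .
      also have "\<dots> \<le> h b" using monoh[OF xy(3)] .
      finally have "x \<in> W" unfolding W_def using xy(4) by simp
      hence "x \<le> Sup_fin W" using finW by (simp add: Sup_fin.coboundedI)
      thus "?Q t" using xy by blast
    qed
    show "?Q (sup x z)" if h1: "?Q x" and h2: "?Q z" for x z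
    proof -
      obtain x1 y1 x2 y2 where p: "(x1,y1) \<in> sublat_gen Z" "x \<le> x1" "x1 \<le> Sup_fin W" "y1 \<le> b"
        "(x2,y2) \<in> sublat_gen Z" "z \<le> x2" "x2 \<le> Sup_fin W" "y2 \<le> b"
        using h1 h2 by meson
      have "(sup x1 x2, sup y1 y2) \<in> sublat_gen Z" using S_sup p(1,5) .
      moreover have "sup x z \<le> sup x1 x2" "sup x1 x2 \<le> Sup_fin W" "sup y1 y2 \<le> b"
        using p by (auto intro: le_supI1 le_supI2)
      ultimately show ?thesis by blast
    qed
  qed
  then obtain x y where xy: "(x,y) \<in> sublat_gen Z" "Sup_fin W \<le> x" "x \<le> Sup_fin W" "y \<le> b" by blast
  have "(sup x xs, sup y b) \<in> sublat_gen Z" using S_sup xy(1) xs(2) .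
  moreover have "xs \<le> Sup_fin W" using finW xsW by (simp add: Sup_fin.coboundedI)
  ultimately have "(Sup_fin W, b) \<in> sublat_gen Z"
    using xy by (simp add: order_antisym sup_absorb1 sup_absorb2)
  thus ?thesis using al by simp
qed

lemma claim_v:
  assumes aH: "a \<in> H_set X k" and vH: "v \<in> H_set Y k" and le: "g a \<le> h v"
  shows "\<exists>x. (x, v) \<in> sublat_gen Z \<and> a \<le> x"
proof -
  obtain V where V: "finite V" "V \<subseteq> G_set Y k" "v = bigmeet Y V"
    using vH unfolding H_set_def meet_cl_def by auto
  show ?thesis
  proof (cases "V = {}")
    case True
    then show ?thesis using V topS topX by (auto simp: bigmeet_def)
  next
    case False
    let ?Q = "\<lambda>t. \<exists>x. (x, t) \<in> sublat_gen Z \<and> a \<le> x"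
    have "?Q (Inf_fin V)"
    proof (rule meet_closed[OF V(1) False])
      show "\<forall>t\<in>V. ?Q t"
      proof
        fix t assume t: "t \<in> V"
        have "v \<le> t" using V False t by (simp add: bigmeet_def Inf_fin.coboundedI)
        hence gt: "g a \<le> h t" using le monoh order_trans by blast
        have tG: "t \<in> G_set Y k" using t V(2) by blast
        have "Good k t" using Good_all tG by blast
        then obtain x1 y1 where p: "(x1,y1) \<in> sublat_gen Z" "a \<le> x1" "y1 \<le> t"
          using aH gt unfolding Good_def by blast
        have "(sup x1 (alpha_k X g k (h t)), sup y1 t) \<in> sublat_gen Z"
          using S_sup[OF p(1) main1[OF tG]] .
        moreover have "sup y1 t = t" using p(3) by (simp add: sup_absorb2)
        ultimately show "?Q t" using p(2) by (metis le_supI1 order_refl)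
      qed
      show "?Q (inf x z)" if h1: "?Q x" and h2: "?Q z" for x z
      proof -
        obtain x1 x2 where p: "(x1,x) \<in> sublat_gen Z" "a \<le> x1" "(x2,z) \<in> sublat_gen Z" "a \<le> x2"
          using h1 h2 by meson
        have "(inf x1 x2, inf x z) \<in> sublat_gen Z" using S_inf p(1,3) .
        thus ?thesis using p(2,4) by (metis le_inf_iff)
      qed
    qed
    then show ?thesis using V False by (simp add: bigmeet_def)
  qed
qed

lemma main2:
  assumes aH: "a \<in> H_set X k"
  shows "(a, beta_k Y h k (g a)) \<in> sublat_gen Z"
proof -
  define V where "V = {v \<in> H_set Y k. g a \<le> h v}"
  have finV: "finite V" unfolding V_def using finite_H[OF finY, of k] by simp
  obtain ys where ys: "ys \<in> H_set Y k" "(a, ys) \<in> sublat_gen Z" using partX[OF aH] by blast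
  have "g a = h ys" using S_pb[OF ys(2)] .
  hence ysV: "ys \<in> V" unfolding V_def using ys(1) by simp
  hence Vne: "V \<noteq> {}" by blast
  have be: "beta_k Y h k (g a) = Inf_fin V" unfolding beta_k_def bigmeet_def V_def[symmetric] using Vne by simp
  let ?Q = "\<lambda>t. \<exists>x y. (x,y) \<in> sublat_gen Z \<and> a \<le> x \<and> Inf_fin V \<le> y \<and> y \<le> t"
  have "?Q (Inf_fin V)"
  proof (rule meet_closed[OF finV Vne, where Q = ?Q])
    show "\<forall>t\<in>V. ?Q t"
    proof
      fix t assume t: "t \<in> V"
      obtain x where x: "(x, t) \<in> sublat_gen Z" "a \<le> x"
        using claim_v[OF aH, of t] t unfolding V_def by blast
      have "Inf_fin V \<le> t" using finV t by (simp add: Inf_fin.coboundedI)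
      thus "?Q t" using x by blast
    qed
    show "?Q (inf x z)" if h1: "?Q x" and h2: "?Q z" for x z
    proof -
      obtain x1 y1 x2 y2 where p: "(x1,y1) \<in> sublat_gen Z" "a \<le> x1" "Inf_fin V \<le> y1" "y1 \<le> x"
        "(x2,y2) \<in> sublat_gen Z" "a \<le> x2" "Inf_fin V \<le> y2" "y2 \<le> z"
        using h1 h2 by meson
      have "(inf x1 x2, inf y1 y2) \<in> sublat_gen Z" using S_inf p(1,5) .
      moreover have "a \<le> inf x1 x2" "Inf_fin V \<le> inf y1 y2" "inf y1 y2 \<le> inf x z"
        using p by (auto intro: le_infI1 le_infI2)
      ultimately show ?thesis by blast
    qed
  qed
  then obtain x y where xy: "(x,y) \<in> sublat_gen Z" "a \<le> x" "Inf_fin V \<le> y" "y \<le> Inf_fin V" by blast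
  have "(inf a x, inf ys y) \<in> sublat_gen Z" using S_inf ys(2) xy(1) .
  moreover have "Inf_fin V \<le> ys" using finV ysV by (simp add: Inf_fin.coboundedI)
  ultimately have "(a, Inf_fin V) \<in> sublat_gen Z"
    using xy by (simp add: order_antisym inf_absorb1 inf_absorb2)
  thus ?thesis using be by simp
qed

end

theorem claim2:
  fixes X0 :: "'a::lattice set" and Y0 :: "'b::lattice set" and P :: "'d::lattice set"
    and g :: "'a \<Rightarrow> 'd" and h :: "'b \<Rightarrow> 'd"
    and E :: "'d set" and Z :: "('a \<times> 'b) set" and X :: "'a set" and Y :: "'b set"
  assumes "fin_gen_set X0" and "fin_gen_set Y0" and "fin_gen_set P"
    and "dean_condition P"
    and "lattice_epi g" and "bounded_hom g"
    and "lattice_epi h" and "bounded_hom h"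
    and E_def: "E = g ` X0 \<union> h ` Y0 \<union> P"
    and Z_def: "Z = {(x, alpha_map h (g x)) | x. x \<in> X0}
                 \<union> {(beta_map g (h y), y) | y. y \<in> Y0}
                 \<union> {(alpha_map g d, beta_map h d) | d. d \<in> E}
                 \<union> {(beta_map g d, alpha_map h d) | d. d \<in> E}"
    and X_def: "X = fst ` Z" and Y_def: "Y = snd ` Z"
  shows "\<forall>k::nat. (\<forall>b \<in> G_set Y k. (alpha_k X g k (h b), b) \<in> sublat_gen Z)
                 \<and> (\<forall>a \<in> H_set X k. (a, beta_k Y h k (g a)) \<in> sublat_gen Z)"
proof -
  interpret pbctx X0 Y0 P g h E Z X Y
    by (rule pbctx.intro) (fact assms)+
  show ?thesis using main1 main2 by blast
qed


end
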